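(* Let $a,b,c,k,m>0$ and consider the system $$\frac{dx}{dt}=bx(1-x-cy),\qquad \frac{dy}{dt}=y\Big(\frac{1}{1+kx}-y-ax-mxy\Big).$$ Suppose $0<c<1$ and $0<k<\frac1a-1$. Then the locally stable positive equilibrium $E_{2*}=(x^*,y^* )$ (with $x^*,y^*>0$) of the system is globally stable, i.e. every solution with $x(0)>0$, $y(0)>0$ converges to $E_{2*}$ as $t\to\infty$.
   Context: All parameters are positive. A positive equilibrium is an equilibrium with both coordinates positive; $E_{2*}$ denotes the positive equilibrium that is a stable node. *)

theory Defs
  imports "HOL-Analysis.Analysis"
begin

definition fx :: "real \<Rightarrow> real \<Rightarrow> real \<Rightarrow> real \<Rightarrow> real \<Rightarrow> real \<Rightarrow> real \<Rightarrow> real" where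
  "fx a b c k m x y = b * x * (1 - x - c * y)"

definition fy :: "real \<Rightarrow> real \<Rightarrow> real \<Rightarrow> real \<Rightarrow> real \<Rightarrow> real \<Rightarrow> real \<Rightarrow> real" where
  "fy a b c k m x y = y * (1 / (1 + k * x) - y - a * x - m * x * y)"

definition J11 :: "real \<Rightarrow> real \<Rightarrow> real \<Rightarrow> real \<Rightarrow> real \<Rightarrow> real \<Rightarrow> real \<Rightarrow> real" where
  "J11 a b c k m x y = b * (1 - 2 * x - c * y)"

definition J12 :: "real \<Rightarrow> real \<Rightarrow> real \<Rightarrow> real \<Rightarrow> real \<Rightarrow> real \<Rightarrow> real \<Rightarrow> real" where
  "J12 a b c k m x y = - b * c * x"

definition J21 :: "real \<Rightarrow> real \<Rightarrow> real \<Rightarrow> real \<Rightarrow> real \<Rightarrow> real \<Rightarrow> real \<Rightarrow> real" where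
  "J21 a b c k m x y = y * (- k / (1 + k * x)^2 - a - m * y)"

definition J22 :: "real \<Rightarrow> real \<Rightarrow> real \<Rightarrow> real \<Rightarrow> real \<Rightarrow> real \<Rightarrow> real \<Rightarrow> real" where
  "J22 a b c k m x y = 1 / (1 + k * x) - 2 * y - a * x - 2 * m * x * y"

definition pos_equilibrium :: "real \<Rightarrow> real \<Rightarrow> real \<Rightarrow> real \<Rightarrow> real \<Rightarrow> real \<Rightarrow> real \<Rightarrow> bool" where
  "pos_equilibrium a b c k m x y \<longleftrightarrow>
     x > 0 \<and> y > 0 \<and> fx a b c k m x y = 0 \<and> fy a b c k m x y = 0"

text \<open>Stable node: the Jacobian has two real negative eigenvalues
  (trace < 0, determinant > 0, nonnegative discriminant).\<close>

definition stable_node :: "real \<Rightarrow> real \<Rightarrow> real \<Rightarrow> real \<Rightarrow> real \<Rightarrow> real \<Rightarrow> real \<Rightarrow> bool" where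
  "stable_node a b c k m x y \<longleftrightarrow>
     (let p = J11 a b c k m x y; q = J12 a b c k m x y;
          r = J21 a b c k m x y; s = J22 a b c k m x y;
          tr = p + s; det = p * s - q * r
      in tr < 0 \<and> det > 0 \<and> tr^2 - 4 * det \<ge> 0)"

definition is_solution :: "real \<Rightarrow> real \<Rightarrow> real \<Rightarrow> real \<Rightarrow> real \<Rightarrow> (real \<Rightarrow> real) \<Rightarrow> (real \<Rightarrow> real) \<Rightarrow> bool" where
  "is_solution a b c k m x y \<longleftrightarrow>
     (\<forall>t\<ge>0. (x has_real_derivative fx a b c k m (x t) (y t)) (at t within {0..}) \<and>
             (y has_real_derivative fy a b c k m (x t) (y t)) (at t within {0..}))"

end

theory Submission
  imports Defs
begin

lemma W_deriv:
  fixes x y :: "real \<Rightarrow> real"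
  assumes "(x has_real_derivative X') (at t within S)" "(y has_real_derivative Y') (at t within S)" "x t > 0" "y t > 0"
  shows "((\<lambda>t. g * (x t - xs * ln(x t)) + (y t - ys * ln(y t))) has_real_derivative g * (X' - xs * X'/x t) + (Y' - ys * Y'/y t)) (at t within S)"
proof -
  have l1: "((\<lambda>t. ln (x t)) has_real_derivative X' / x t) (at t within S)"
    using assms by (auto intro!: derivative_eq_intros)
  have l2: "((\<lambda>t. ln (y t)) has_real_derivative Y' / y t) (at t within S)"
    using assms by (auto intro!: derivative_eq_intros)
  have "((\<lambda>t. g * (x t - xs * ln(x t)) + (y t - ys * ln(y t))) has_real_derivative g * (X' - xs * (X'/x t)) + (Y' - ys * (Y'/y t))) (at t within S)"
    by (intro DERIV_add DERIV_cmult DERIV_diff assms l1 l2)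
  then show ?thesis by simp
qed

lemma mono_lemma:
  fixes f f' :: "real \<Rightarrow> real"
  assumes d: "\<And>t. 0 \<le> t \<Longrightarrow> t < T \<Longrightarrow> (f has_real_derivative f' t) (at t within {0..})"
    and n: "\<And>t. 0 \<le> t \<Longrightarrow> t < T \<Longrightarrow> f' t \<le> 0" and t: "0 \<le> t" "t < T"
  shows "f t \<le> f 0"
proof (rule DERIV_nonpos_imp_decreasing_open[OF t(1)])
  fix s assume s: "0 < s" "s < t"
  have sT: "0 \<le> s" "s < T" using s t by auto
  have "(f has_real_derivative f' s) (at s within {0<..})"
    by (rule DERIV_subset[OF d[OF sT]]) auto
  moreover have "at s within {0<..} = at s"
    by (rule at_within_open) (use s in auto)
  ultimately have "(f has_real_derivative f' s) (at s)"
    by simp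
  then show "\<exists>y. (f has_real_derivative y) (at s) \<and> y \<le> 0" using n[OF sT] by blast
next
  have "\<And>s. s \<in> {0..t} \<Longrightarrow> (f has_real_derivative f' s) (at s within {0..t})"
  proof -
    fix s assume "s \<in> {0..t}"
    then have sT: "0 \<le> s" "s < T" using t by auto
    show "(f has_real_derivative f' s) (at s within {0..t})"
      by (rule DERIV_subset[OF d[OF sT]]) auto
  qed
  then show "continuous_on {0..t} f"
    by (rule DERIV_continuous_on)
qed

lemma quad:
  fixes D0 c DD EE u w :: real
  assumes D0: "D0 > 0" and c: "c > 0" and cD: "c * D0 < 1" and DD: "0 \<le> DD" "DD \<le> D0" and EE: "EE \<ge> 1"
  defines "sg \<equiv> (D0 + 1/c)/2"
  defines "ee \<equiv> min (D0/c - D0 * sg) (1 - D0/sg)"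
  shows "-(D0/c) * u^2 - (D0 + DD) * u * w - EE * w^2 \<le> -ee * (u^2+w^2)" and "ee > 0"
proof -
  have ic: "D0 < 1/c" using cD c by (simp add: field_simps)
  have s1: "sg > D0" using ic c unfolding sg_def by (simp add: field_simps)
  have s2: "sg < 1/c" using ic c unfolding sg_def by (simp add: field_simps)
  have spos: "sg > 0" using s1 D0 by linarith
  have p1: "D0/c - D0 * sg > 0"
  proof -
    have "D0 * sg < D0 * (1/c)" using s2 D0 by (intro mult_strict_left_mono) auto
    then show ?thesis by simp
  qed
  have p2: "1 - D0/sg > 0" using s1 spos by (simp add: field_simps)
  have e1: "ee \<le> D0/c - D0 * sg" "ee \<le> 1 - D0/sg" by (auto simp: ee_def)
  show "ee > 0" unfolding ee_def using p1 p2 by simp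
  have "0 \<le> (sg * \<bar>u\<bar> - \<bar>w\<bar>)^2" by simp
  also have "\<dots> = sg * (sg * u^2) + w^2 - 2 * \<bar>u\<bar> * \<bar>w\<bar> * sg"
    by (simp add: power2_eq_square algebra_simps)
  finally have "2 * \<bar>u\<bar> * \<bar>w\<bar> * sg \<le> sg * (sg * u^2) + w^2" by simp
  then have "(2 * \<bar>u\<bar> * \<bar>w\<bar> * sg) / sg \<le> (sg * (sg * u^2) + w^2) / sg"
    using spos by (intro divide_right_mono) auto
  then have h: "2 * \<bar>u\<bar> * \<bar>w\<bar> \<le> sg * u^2 + w^2/sg" using spos
    by (simp add: add_divide_distrib)
  have uw: "- (u * w) \<le> \<bar>u\<bar> * \<bar>w\<bar>" by (simp add: abs_mult[symmetric])
  have "-(D0 + DD) * u * w = (D0 + DD) * (- (u * w))" by (simp add: algebra_simps)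
  also have "\<dots> \<le> (D0+DD) * (\<bar>u\<bar> * \<bar>w\<bar>)" using uw DD D0 by (intro mult_left_mono) auto
  also have "\<dots> \<le> (2 * D0) * (\<bar>u\<bar> * \<bar>w\<bar>)" using DD by (intro mult_right_mono) auto
  also have "\<dots> = D0 * (2 * \<bar>u\<bar> * \<bar>w\<bar>)" by simp
  also have "\<dots> \<le> D0 * (sg * u^2 + w^2/sg)" using h D0 by (intro mult_left_mono) auto
  finally have A: "-(D0 + DD) * u * w \<le> D0 * (sg * u^2 + w^2/sg)" .
  have B0: "1 * w^2 \<le> EE * w^2" using EE by (intro mult_right_mono) auto
  have B: "- EE * w^2 \<le> - (w^2)" using B0 by simp
  have C1: "ee * u^2 \<le> (D0/c - D0 * sg) * u^2" using e1 by (intro mult_right_mono) auto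
  have C2: "ee * w^2 \<le> (1 - D0/sg) * w^2" using e1 by (intro mult_right_mono) auto
  have E1: "D0 * (sg * u^2 + w^2/sg) = D0 * sg * u^2 + (D0/sg) * w^2" by (simp add: algebra_simps)
  have E2: "(D0/c - D0 * sg) * u^2 = (D0/c) * u^2 - D0 * sg * u^2" by (simp add: algebra_simps)
  have E3: "(1 - D0/sg) * w^2 = w^2 - (D0/sg) * w^2" by (simp add: algebra_simps)
  have E4: "-(D0/c) * u^2 - (D0 + DD) * u * w - EE * w^2 = -(D0/c) * u^2 + (-(D0 + DD) * u * w) + (- EE * w^2)" by (simp add: algebra_simps)
  have E5: "-ee * (u^2+w^2) = - (ee * u^2) - ee * w^2" by (simp add: algebra_simps)
  show "-(D0/c) * u^2 - (D0 + DD) * u * w - EE * w^2 \<le> -ee * (u^2+w^2)"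
    unfolding E4 E5 using A B C1 C2 E1 E2 E3 by linarith
qed

lemma phi_upper:
  fixes X xs :: real assumes "X > 0" "xs > 0"
  shows "X - xs * ln X - (xs - xs * ln xs) \<le> (X - xs)^2/X"
proof -
  have "ln (xs/X) \<le> xs/X - 1" using assms by (intro ln_le_minus_one) auto
  then have "ln xs - ln X \<le> xs/X - 1" using assms by (simp add: ln_div)
  then have "xs * (ln xs - ln X) \<le> xs * (xs/X - 1)" using assms by (intro mult_left_mono) auto
  moreover have "(X - xs)^2/X = X - xs - xs + xs * (xs/X)" using assms by (simp add: field_simps power2_eq_square)
  ultimately show ?thesis by (simp add: algebra_simps)
qed

lemma phi_lower:
  fixes X xs :: real assumes X: "X > 0" and xs: "xs > 0"
  shows "(sqrt X - sqrt xs)^2 \<le> X - xs * ln X - (xs - xs * ln xs)"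
proof -
  define q where "q = sqrt X / sqrt xs"
  have q0: "q > 0" using assms by (simp add: q_def)
  have "ln q \<le> q - 1" using q0 by (rule ln_le_minus_one)
  moreover have "ln q = ln (sqrt X) - ln (sqrt xs)" unfolding q_def using assms by (simp add: ln_div)
  moreover have "ln (sqrt X) = ln X / 2" using X by (simp add: ln_sqrt)
  moreover have "ln (sqrt xs) = ln xs / 2" using xs by (simp add: ln_sqrt)
  ultimately have h: "ln X - ln xs \<le> 2 * q - 2" by linarith
  have h2: "xs * (ln X - ln xs) \<le> xs * (2 * q - 2)" using h xs by (intro mult_left_mono) auto
  have ss: "sqrt xs * sqrt xs = xs" using xs by simp
  have sp: "sqrt xs \<noteq> 0" using xs by simp
  have gen: "\<And>a b::real. a \<noteq> 0 \<Longrightarrow> a * a * b / a = a * b" by simp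
  have "xs * q = (sqrt xs * sqrt xs) * sqrt X / sqrt xs" unfolding q_def by (simp only: ss times_divide_eq_right)
  also have "\<dots> = sqrt xs * sqrt X" using sp by (rule gen)
  finally have e1: "xs * q = sqrt xs * sqrt X" .
  have e2: "(sqrt X - sqrt xs)^2 = X + xs - 2 * (sqrt xs * sqrt X)" using assms by (simp add: power2_eq_square algebra_simps)
  have e3: "xs * (ln X - ln xs) = xs * ln X - xs * ln xs" by (simp add: algebra_simps)
  have e4: "xs * (2 * q - 2) = 2 * (xs * q) - 2 * xs" by (simp add: algebra_simps)
  show ?thesis using h2 e1 e2 e3 e4 by linarith
qed

lemma exp_decay_lim:
  fixes lam K :: real assumes "lam > 0"
  shows "((\<lambda>t. K * exp (- lam * t)) \<longlongrightarrow> 0) at_top"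
proof -
  have "LIM t at_top. lam * t :> at_top"
    by (rule filterlim_tendsto_pos_mult_at_top[OF tendsto_const assms filterlim_ident])
  then have "LIM t at_top. - lam * t :> at_bot"
    by (simp add: filterlim_uminus_at_bot)
  then have "((\<lambda>t. exp (- lam * t)) \<longlongrightarrow> 0) at_top"
    by (rule filterlim_compose[OF exp_at_bot])
  then show ?thesis using tendsto_mult_right_zero by blast
qed

lemma conv_lemma:
  fixes x :: "real \<Rightarrow> real" and xs lam K :: real
  assumes pos: "\<And>t. t \<ge> 0 \<Longrightarrow> x t > 0" and xs: "xs > 0" and lam: "lam > 0"
    and b: "\<And>t. t \<ge> 0 \<Longrightarrow> (sqrt (x t) - sqrt xs)^2 \<le> K * exp (- lam * t)"
  shows "(x \<longlongrightarrow> xs) at_top"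
proof -
  have "((\<lambda>t. (sqrt (x t) - sqrt xs)^2) \<longlongrightarrow> 0) at_top"
  proof (rule real_tendsto_sandwich[OF _ _ tendsto_const exp_decay_lim[OF lam, of K]])
    show "\<forall>\<^sub>F t in at_top. 0 \<le> (sqrt (x t) - sqrt xs)^2" by simp
    show "\<forall>\<^sub>F t in at_top. (sqrt (x t) - sqrt xs)^2 \<le> K * exp (- lam * t)"
      using eventually_ge_at_top[of "0::real"] by eventually_elim (rule b)
  qed
  then have "((\<lambda>t. sqrt ((sqrt (x t) - sqrt xs)^2)) \<longlongrightarrow> sqrt 0) at_top"
    by (rule tendsto_real_sqrt)
  then have "((\<lambda>t. \<bar>sqrt (x t) - sqrt xs\<bar>) \<longlongrightarrow> 0) at_top" by simp
  then have "((\<lambda>t. sqrt (x t) - sqrt xs) \<longlongrightarrow> 0) at_top" by (simp add: tendsto_rabs_zero_iff)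
  then have "((\<lambda>t. sqrt (x t)) \<longlongrightarrow> sqrt xs) at_top" by (rule LIM_zero_cancel)
  then have "((\<lambda>t. (sqrt (x t))^2) \<longlongrightarrow> (sqrt xs)^2) at_top" by (rule tendsto_power)
  then have "((\<lambda>t. (sqrt (x t))^2) \<longlongrightarrow> xs) at_top" using xs by simp
  moreover have "\<forall>\<^sub>F t in at_top. (sqrt (x t))^2 = x t"
    using eventually_ge_at_top[of "0::real"] by eventually_elim (use pos in \<open>auto intro: less_imp_le\<close>)
  ultimately show ?thesis by (rule Lim_transform_eventually)
qed

lemma lowb:
  fixes X xs G Z0 :: real
  assumes X: "X > 0" and xs: "xs > 0" and G: "G > 0" and h: "G * (X - xs * ln X - (xs - xs * ln xs)) \<le> Z0"
  shows "exp (ln xs - (Z0/G + xs)/xs) \<le> X"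
proof -
  have "X - xs * ln X - (xs - xs * ln xs) \<le> Z0 / G" using h G by (simp add: field_simps)
  then have "xs * (ln xs - ln X) \<le> Z0/G + xs" using X by (simp add: algebra_simps)
  then have "ln xs - ln X \<le> (Z0/G + xs)/xs" using xs by (simp add: field_simps)
  then have "ln xs - (Z0/G + xs)/xs \<le> ln X" by linarith
  then have "exp (ln xs - (Z0/G + xs)/xs) \<le> exp (ln X)" by simp
  then show ?thesis using X by simp
qed

lemma DW_formula:
  fixes a b c k m xs ys X Y :: real
  assumes X: "X > 0" and Y: "Y > 0" and xs: "xs > 0" and b: "b > 0" and c: "c > 0" and k: "k > 0"
    and eq1: "1 - xs - c * ys = 0" and eq2: "1/(1 + k * xs) - ys - a * xs - m * xs * ys = 0"
  shows "(D0/(c * b)) * (fx a b c k m X Y - xs * fx a b c k m X Y / X) + (fy a b c k m X Y - ys * fy a b c k m X Y / Y)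
     = -(D0/c) * (X-xs)^2 - (D0 + (a + m * ys + k/((1 + k * X) * (1 + k * xs)))) * (X-xs) * (Y-ys) - (1 + m * X) * (Y-ys)^2"
proof -
  define F where "F = 1 - X - c * Y"
  define H where "H = 1/(1 + k * X) - Y - a * X - m * X * Y"
  define K where "K = k/((1 + k * X) * (1 + k * xs))"
  have P1: "fx a b c k m X Y - xs * fx a b c k m X Y / X = b * F * (X - xs)"
  proof -
    have "fx a b c k m X Y = b * X * F" unfolding fx_def F_def by simp
    then show ?thesis using X by (simp add: field_simps)
  qed
  have P2: "F = -(X-xs) - c * (Y-ys)" unfolding F_def using eq1 by (simp add: algebra_simps)
  have gb: "(D0/(c * b)) * (b * F * (X - xs)) = (D0/c) * F * (X - xs)" using b by simp
  have P3: "fy a b c k m X Y - ys * fy a b c k m X Y / Y = (Y - ys) * H"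
  proof -
    have "fy a b c k m X Y = Y * H" unfolding fy_def H_def by simp
    then show ?thesis using Y by (simp add: field_simps)
  qed
  have d1: "1 + k * X > 0" "1 + k * xs > 0" using X xs k by (auto intro: add_pos_pos)
  have P4: "1/(1 + k * X) - 1/(1 + k * xs) = - K * (X - xs)"
    unfolding K_def using d1 by (simp add: field_simps) (simp add: minus_divide_left algebra_simps)
  have P5: "H = -(a + m * ys + K) * (X - xs) - (1 + m * X) * (Y - ys)"
  proof -
    have "H = (1/(1 + k * X) - 1/(1 + k * xs)) + (1/(1 + k * xs) - ys - a * xs - m * xs * ys) - (Y - ys) - a * (X - xs) - m * (X * Y - xs * ys)"
      unfolding H_def by (simp add: algebra_simps)
    also have "\<dots> = - K * (X - xs) - (Y - ys) - a * (X - xs) - m * (X * (Y - ys) + ys * (X - xs))"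
      unfolding P4 eq2 by (simp add: algebra_simps)
    finally show ?thesis by (simp add: algebra_simps)
  qed
  show ?thesis
    unfolding P1 gb P3 P5 P2 K_def[symmetric] using b c by (simp add: algebra_simps power2_eq_square)
qed

theorem theorem7:
  fixes a b c k m xs ys :: real
  assumes "a > 0" "b > 0" "c > 0" "k > 0" "m > 0"
    and "c < 1" and "k < 1 / a - 1"
    and "pos_equilibrium a b c k m xs ys"
    and "stable_node a b c k m xs ys"
  shows "\<forall>x y. is_solution a b c k m x y \<and> x 0 > 0 \<and> y 0 > 0 \<longrightarrow>
           (x \<longlongrightarrow> xs) at_top \<and> (y \<longlongrightarrow> ys) at_top"
proof (intro allI impI)
  fix x y :: "real \<Rightarrow> real"
  assume H: "is_solution a b c k m x y \<and> x 0 > 0 \<and> y 0 > 0"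
  have a: "a > 0" and b: "b > 0" and c: "c > 0" and k: "k > 0" and m: "m > 0" and c1: "c < 1"
    using assms by auto
  have xs: "xs > 0" and ys: "ys > 0" and f1: "fx a b c k m xs ys = 0" and f2: "fy a b c k m xs ys = 0"
    using assms(8) by (auto simp: pos_equilibrium_def)
  have eq1: "1 - xs - c * ys = 0" using f1 xs b by (simp add: fx_def)
  have eq2: "1/(1 + k * xs) - ys - a * xs - m * xs * ys = 0" using f2 ys by (simp add: fy_def)
  have kx: "1 + k * xs > 0" using k xs by (simp add: add_pos_pos)
  define D0 where "D0 = a + m * ys + k/(1 + k * xs)"
  have D0pos: "D0 > 0" unfolding D0_def using a m ys k kx by (simp add: add_pos_pos)
  have cD: "c * D0 < 1"
  proof -
    have r0: "1 - 1/(1 + k * xs) = (k * xs)/(1 + k * xs)" using kx by (simp add: field_simps)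
    have r: "k/(1 + k * xs) = (1 - 1/(1 + k * xs))/xs" unfolding r0 using xs by simp
    have "c * D0 = c * a + c * m * ys + c * (1 - (ys + a * xs + m * xs * ys))/xs"
      unfolding D0_def r using eq2 by (simp add: algebra_simps)
    also have "\<dots> = (c - c * ys)/xs" using xs by (simp add: field_simps)
    also have "\<dots> = 1 - (1 - c)/xs" using xs eq1 by (simp add: field_simps)
    finally have "c * D0 = 1 - (1 - c)/xs" .
    moreover have "(1 - c)/xs > 0" using c1 xs by simp
    ultimately show ?thesis by linarith
  qed
  define g where "g = D0/(c * b)"
  have gpos: "g > 0" unfolding g_def using D0pos b c by simp
  define ee where "ee = min (D0/c - D0 * ((D0 + 1/c)/2)) (1 - D0/((D0 + 1/c)/2))"
  define DW where "DW X Y = g * (fx a b c k m X Y - xs * fx a b c k m X Y / X) + (fy a b c k m X Y - ys * fy a b c k m X Y / Y)" for X Y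
  have eepos: "ee > 0"
    unfolding ee_def by (rule quad(2)[OF D0pos c cD, of 0 1]) (use D0pos in auto)
  have key: "DW X Y \<le> -ee * ((X - xs)^2 + (Y - ys)^2)" if X: "X > 0" and Y: "Y > 0" for X Y
  proof -
    define DD where "DD = a + m * ys + k/((1 + k * X) * (1 + k * xs))"
    have kX: "1 + k * X > 0" using k X by (simp add: add_pos_pos)
    have DD0: "0 \<le> DD" unfolding DD_def using a m ys k kX kx by simp
    have "1 * (1 + k * xs) \<le> (1 + k * X) * (1 + k * xs)" using kx k X by (intro mult_right_mono) auto
    then have "k/((1 + k * X) * (1 + k * xs)) \<le> k/(1 + k * xs)"
      using k kX kx by (intro divide_left_mono) (auto simp del: mult_1)
    then have DD1: "DD \<le> D0" unfolding DD_def D0_def by simp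
    have EE: "1 + m * X \<ge> 1" using m X by simp
    have "DW X Y = -(D0/c) * (X-xs)^2 - (D0 + DD) * (X-xs) * (Y-ys) - (1 + m * X) * (Y-ys)^2"
      unfolding DW_def g_def DD_def by (rule DW_formula[OF X Y xs b c k eq1 eq2])
    also have "\<dots> \<le> -ee * ((X - xs)^2 + (Y - ys)^2)"
      unfolding ee_def by (rule quad(1)[OF D0pos c cD DD0 DD1 EE])
    finally show ?thesis .
  qed
  have DWneg: "DW X Y \<le> 0" if "X > 0" "Y > 0" for X Y
  proof -
    have "-ee * ((X - xs)^2 + (Y - ys)^2) \<le> 0" using eepos by (simp add: mult_nonneg_nonneg)
    then show ?thesis using key[OF that] by linarith
  qed
  have dx: "(x has_real_derivative fx a b c k m (x t) (y t)) (at t within {0..})" if "t \<ge> 0" for t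
    using H that by (auto simp: is_solution_def)
  have dy: "(y has_real_derivative fy a b c k m (x t) (y t)) (at t within {0..})" if "t \<ge> 0" for t
    using H that by (auto simp: is_solution_def)
  have contx: "continuous_on {0..} x" by (rule DERIV_continuous_on[OF dx]) auto
  have conty: "continuous_on {0..} y" by (rule DERIV_continuous_on[OF dy]) auto
  define W where "W t = g * (x t - xs * ln (x t)) + (y t - ys * ln (y t))" for t
  define Ws where "Ws = g * (xs - xs * ln xs) + (ys - ys * ln ys)"
  have Wd: "(W has_real_derivative DW (x t) (y t)) (at t within {0..})"
    if "t \<ge> 0" "x t > 0" "y t > 0" for t
    unfolding W_def[abs_def] DW_def by (rule W_deriv[OF dx[OF that(1)] dy[OF that(1)] that(2,3)])
  have bound: "W t \<le> W 0" if T: "\<And>s. 0 \<le> s \<Longrightarrow> s < T \<Longrightarrow> x s > 0 \<and> y s > 0" and t: "0 \<le> t" "t < T" for T t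
  proof (rule mono_lemma[where f' = "\<lambda>s. DW (x s) (y s)" and T = T])
    show "(W has_real_derivative DW (x s) (y s)) (at s within {0..})" if "0 \<le> s" "s < T" for s
      using Wd[of s] T[of s] that by auto
    show "DW (x s) (y s) \<le> 0" if "0 \<le> s" "s < T" for s
      using DWneg T[of s] that by auto
  qed (use t in auto)
  define Z0 where "Z0 = W 0 - Ws"
  define dlx where "dlx = exp (ln xs - (Z0/g + xs)/xs)"
  define dly where "dly = exp (ln ys - (Z0/1 + ys)/ys)"
  have dlpos: "dlx > 0" "dly > 0" unfolding dlx_def dly_def by auto
  have Wsplit: "W t - Ws = g * (x t - xs * ln (x t) - (xs - xs * ln xs)) + (y t - ys * ln (y t) - (ys - ys * ln ys))" for t
    unfolding W_def Ws_def by (simp add: algebra_simps)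
  have phx: "(sqrt (x t) - sqrt xs)^2 \<le> x t - xs * ln (x t) - (xs - xs * ln xs)" if "x t > 0" for t
    by (rule phi_lower[OF that xs])
  have phy: "(sqrt (y t) - sqrt ys)^2 \<le> y t - ys * ln (y t) - (ys - ys * ln ys)" if "y t > 0" for t
    by (rule phi_lower[OF that ys])
  have lower: "dlx \<le> x t \<and> dly \<le> y t" if "W t \<le> W 0" "x t > 0" "y t > 0" for t
  proof -
    have p1: "0 \<le> x t - xs * ln (x t) - (xs - xs * ln xs)" using phx[OF that(2)] by (meson order_trans zero_le_power2)
    have p2: "0 \<le> y t - ys * ln (y t) - (ys - ys * ln ys)" using phy[OF that(3)] by (meson order_trans zero_le_power2)
    have p3: "0 \<le> g * (x t - xs * ln (x t) - (xs - xs * ln xs))" using p1 gpos by simp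
    have "W t - Ws \<le> Z0" using that(1) unfolding Z0_def by simp
    then have h1: "g * (x t - xs * ln (x t) - (xs - xs * ln xs)) \<le> Z0"
      and h2': "y t - ys * ln (y t) - (ys - ys * ln ys) \<le> Z0"
      using Wsplit[of t] p2 p3 by linarith+
    from h2' have h2: "1 * (y t - ys * ln (y t) - (ys - ys * ln ys)) \<le> Z0" by simp
    show ?thesis unfolding dlx_def dly_def
      using lowb[OF that(2) xs gpos h1] lowb[OF that(3) ys _ h2] by simp
  qed
  have pos: "x t > 0 \<and> y t > 0" if "t \<ge> 0" for t
  proof (rule ccontr)
    assume nt: "\<not> (x t > 0 \<and> y t > 0)"
    define S where "S = ({0..} \<inter> x -` {..0}) \<union> ({0..} \<inter> y -` {..0})"
    have clS: "closed S" unfolding S_def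
      by (intro closed_Un continuous_closed_preimage contx conty) auto
    have tS: "t \<in> S" using nt that unfolding S_def by auto
    have bdd: "bdd_below S" unfolding S_def by (rule bdd_belowI[of _ 0]) auto
    define T0 where "T0 = Inf S"
    have T0S: "T0 \<in> S" unfolding T0_def using closed_contains_Inf[OF _ bdd clS] tS by auto
    have T0ge: "T0 \<ge> 0" using T0S unfolding S_def by auto
    have before: "x s > 0 \<and> y s > 0" if "0 \<le> s" "s < T0" for s
    proof (rule ccontr)
      assume "\<not> (x s > 0 \<and> y s > 0)"
      then have "s \<in> S" using that unfolding S_def by auto
      then have "T0 \<le> s" unfolding T0_def by (rule cInf_lower[OF _ bdd])
      then show False using that by simp
    qed
    have T0pos: "T0 > 0"
    proof (rule ccontr)
      assume "\<not> T0 > 0"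
      then have "T0 = 0" using T0ge by simp
      then show False using T0S H unfolding S_def by auto
    qed
    have lo: "dlx \<le> x s \<and> dly \<le> y s" if "s \<in> {0..<T0}" for s
    proof -
      have s: "0 \<le> s" "s < T0" using that by auto
      have "W s \<le> W 0" by (rule bound[of T0 s]) (use before s in auto)
      then show ?thesis using before[OF s] lower[of s] by auto
    qed
    have cl: "closure {0..<T0} = {0..T0}" using T0pos by simp
    have cx': "continuous_on (closure {0..<T0}) x" unfolding cl by (rule continuous_on_subset[OF contx]) auto
    have cy': "continuous_on (closure {0..<T0}) y" unfolding cl by (rule continuous_on_subset[OF conty]) auto
    have T0cl: "T0 \<in> closure {0..<T0}" unfolding cl using T0ge by simp
    have "dlx \<le> x T0" by (rule continuous_ge_on_closure[OF cx' T0cl]) (use lo in auto)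
    moreover have "dly \<le> y T0" by (rule continuous_ge_on_closure[OF cy' T0cl]) (use lo in auto)
    ultimately have "x T0 > 0" "y T0 > 0" using dlpos by linarith+
    then show False using T0S unfolding S_def by auto
  qed
  have Wle: "W t \<le> W 0" if "t \<ge> 0" for t
    by (rule bound[of "t + 1"]) (use pos that in auto)
  have lowt: "dlx \<le> x t \<and> dly \<le> y t" if "t \<ge> 0" for t
    using lower[OF Wle[OF that]] pos[OF that] by auto
  define C where "C = g/dlx + 1/dly"
  have Cpos: "C > 0" unfolding C_def using gpos dlpos by (intro add_pos_pos divide_pos_pos) auto
  define lam where "lam = ee / C"
  have lampos: "lam > 0" unfolding lam_def using eepos Cpos by simp
  have Zup: "W t - Ws \<le> C * ((x t - xs)^2 + (y t - ys)^2)" if "t \<ge> 0" for t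
  proof -
    have xt: "x t > 0" "y t > 0" using pos[OF that] by auto
    have l: "dlx \<le> x t" "dly \<le> y t" using lowt[OF that] by auto
    have u1: "x t - xs * ln (x t) - (xs - xs * ln xs) \<le> (x t - xs)^2 / dlx"
      using phi_upper[OF xt(1) xs] divide_left_mono[OF l(1), of "(x t - xs)^2"] xt dlpos by simp
    have u2: "y t - ys * ln (y t) - (ys - ys * ln ys) \<le> (y t - ys)^2 / dly"
      using phi_upper[OF xt(2) ys] divide_left_mono[OF l(2), of "(y t - ys)^2"] xt dlpos by simp
    have "W t - Ws \<le> g * ((x t - xs)^2 / dlx) + (y t - ys)^2 / dly"
      unfolding Wsplit using u1 u2 gpos by (smt (verit) mult_left_mono)
    also have "\<dots> = (g/dlx) * (x t - xs)^2 + (1/dly) * (y t - ys)^2" by simp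
    also have "\<dots> \<le> C * (x t - xs)^2 + C * (y t - ys)^2"
    proof (intro add_mono mult_right_mono)
      show "g/dlx \<le> C" "1/dly \<le> C" unfolding C_def using gpos dlpos by auto
    qed auto
    finally show ?thesis by (simp add: algebra_simps)
  qed
  have Zd: "DW (x t) (y t) + lam * (W t - Ws) \<le> 0" if "t \<ge> 0" for t
  proof -
    have xt: "x t > 0" "y t > 0" using pos[OF that] by auto
    have "lam * (W t - Ws) \<le> lam * (C * ((x t - xs)^2 + (y t - ys)^2))"
      using Zup[OF that] lampos by (intro mult_left_mono) auto
    also have "\<dots> = ee * ((x t - xs)^2 + (y t - ys)^2)" unfolding lam_def using Cpos by simp
    finally show ?thesis using key[OF xt] by linarith
  qed
  have decay: "W t - Ws \<le> Z0 * exp (- lam * t)" if t: "t \<ge> 0" for t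
  proof -
    define G where "G s = (W s - Ws) * exp (lam * s)" for s
    have "G t \<le> G 0"
    proof (rule mono_lemma[where f' = "\<lambda>s. DW (x s) (y s) * exp (lam * s) + (W s - Ws) * (exp (lam * s) * lam)" and T = "t + 1"])
      fix s :: real assume s: "0 \<le> s" "s < t + 1"
      have e: "((\<lambda>s. exp (lam * s)) has_real_derivative exp (lam * s) * lam) (at s within {0..})"
        by (auto intro!: derivative_eq_intros)
      have w: "((\<lambda>s. W s - Ws) has_real_derivative DW (x s) (y s)) (at s within {0..})"
        using DERIV_diff[OF Wd[of s] DERIV_const[of Ws]] pos[of s] s by simp
      show "(G has_real_derivative DW (x s) (y s) * exp (lam * s) + (W s - Ws) * (exp (lam * s) * lam)) (at s within {0..})"
        unfolding G_def[abs_def] using DERIV_mult[OF w e] by (simp add: algebra_simps)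
      have "DW (x s) (y s) * exp (lam * s) + (W s - Ws) * (exp (lam * s) * lam) = (DW (x s) (y s) + lam * (W s - Ws)) * exp (lam * s)"
        by (simp add: algebra_simps)
      also have "\<dots> \<le> 0" using Zd[of s] s by (intro mult_nonpos_nonneg) auto
      finally show "DW (x s) (y s) * exp (lam * s) + (W s - Ws) * (exp (lam * s) * lam) \<le> 0" .
    qed (use t in auto)
    then have "(W t - Ws) * exp (lam * t) \<le> Z0" unfolding G_def Z0_def by simp
    then have A: "(W t - Ws) * exp (lam * t) * exp (- lam * t) \<le> Z0 * exp (- lam * t)"
      by (intro mult_right_mono) auto
    have "exp (lam * t) * exp (- lam * t) = 1" by (simp add: exp_add[symmetric])
    then have "W t - Ws = (W t - Ws) * exp (lam * t) * exp (- lam * t)" by (simp add: mult.assoc)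
    then show ?thesis using A by linarith
  qed
  show "(x \<longlongrightarrow> xs) at_top \<and> (y \<longlongrightarrow> ys) at_top"
  proof
    show "(x \<longlongrightarrow> xs) at_top"
    proof (rule conv_lemma[OF _ xs lampos, of _ "Z0 / g"])
      show "x t > 0" if "t \<ge> 0" for t using pos[OF that] by auto
      show "(sqrt (x t) - sqrt xs)^2 \<le> Z0 / g * exp (- lam * t)" if t: "t \<ge> 0" for t
      proof -
        have xt: "x t > 0" "y t > 0" using pos[OF t] by auto
        have p2: "0 \<le> y t - ys * ln (y t) - (ys - ys * ln ys)" using phy[OF xt(2)] by (meson order_trans zero_le_power2)
        have "g * (x t - xs * ln (x t) - (xs - xs * ln xs)) \<le> Z0 * exp (- lam * t)"
          using decay[OF t] Wsplit[of t] p2 by linarith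
        then have "x t - xs * ln (x t) - (xs - xs * ln xs) \<le> Z0 * exp (- lam * t) / g"
          using gpos by (simp add: field_simps)
        then show ?thesis using phx[OF xt(1)] by simp
      qed
    qed
    show "(y \<longlongrightarrow> ys) at_top"
    proof (rule conv_lemma[OF _ ys lampos, of _ "Z0"])
      show "y t > 0" if "t \<ge> 0" for t using pos[OF that] by auto
      show "(sqrt (y t) - sqrt ys)^2 \<le> Z0 * exp (- lam * t)" if t: "t \<ge> 0" for t
      proof -
        have xt: "x t > 0" "y t > 0" using pos[OF t] by auto
        have p1: "0 \<le> x t - xs * ln (x t) - (xs - xs * ln xs)" using phx[OF xt(1)] by (meson order_trans zero_le_power2)
        have "0 \<le> g * (x t - xs * ln (x t) - (xs - xs * ln xs))" using p1 gpos by simp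
        then have "y t - ys * ln (y t) - (ys - ys * ln ys) \<le> Z0 * exp (- lam * t)"
          using decay[OF t] Wsplit[of t] by linarith
        then show ?thesis using phy[OF xt(2)] by simp
      qed
    qed
  qed
qed

end
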